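(* Let $\ell:\mathbb{R}\to\mathbb{R}$ be non-decreasing, convex, non-negative and continuously differentiable on $\mathbb{R}$, with $\ell'(z)>0$ for all $z\ge-\ell(0)/2$. Let $d=\sup\{z\in\mathbb{R}:\ell'(z)=0\}$, and $d=-\infty$ if $\ell'(z)>0$ for all $z$. Assume: (1) $d<-\ell(0)/2$; (2) $\ell$ is twice continuously differentiable on $(d,\infty)$; (3) $\ell''(z)>0$ on $(d,\infty)$; (4) $1/\ell'(z)$ is convex on $(d,\infty)$. Define $\psi(\theta,\rho)=\ell(\rho)-\inf_{z\in\mathbb{R}}\{\frac{1+\theta}{2}\ell(\rho-z)+\frac{1-\theta}{2}\ell(\rho+z)\}$ for $0\le\theta\le1$, $\rho\in\mathbb{R}$. Then for every $\theta\in[0,1]$, $\rho\mapsto\psi(\theta,\rho)$ is non-decreasing on $[-\ell(0)/2,\infty)$. *)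

theory Defs
  imports "HOL-Analysis.Analysis" "HOL-Library.Extended_Real"
begin

definition psi :: "(real \<Rightarrow> real) \<Rightarrow> real \<Rightarrow> real \<Rightarrow> real" where
  "psi l \<theta> \<rho> = l \<rho> - (INF z. (1 + \<theta>) / 2 * l (\<rho> - z) + (1 - \<theta>) / 2 * l (\<rho> + z))"

end

theory Submission
  imports Defs
begin

lemma hm_aux:
  fixes A B C a b :: real
  assumes "0<A" "0<B" "0<C" "0\<le>a" "0\<le>b" "a+b=1" "1/C \<le> (1/A+1/B)/2"
  shows "2*a*A \<le> C \<or> 2*b*B \<le> C"
proof (rule ccontr)
  assume "\<not> ?thesis"
  hence h: "C < 2*a*A" "C < 2*b*B" by auto
  have "2*A*B \<le> C*(A+B)"
  proof -
    have "1/C \<le> (A+B)/(2*A*B)" using assms(7) assms(1,2) by (simp add: field_simps)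
    thus ?thesis using assms(1,2,3) by (simp add: field_simps)
  qed
  moreover have "C*A < 2*b*B*A" using h(2) assms(1) by simp
  moreover have "C*B < 2*a*A*B" using h(1) assms(2) by simp
  ultimately have "2*A*B < 2*A*B*(a+b)" by (simp add: algebra_simps)
  thus False using assms(6) by simp
qed

theorem lemma6:
  fixes l l' l'' :: "real \<Rightarrow> real" and d :: ereal
  assumes mono: "mono l"
    and cvx: "convex_on UNIV l"
    and nonneg: "\<And>z. l z \<ge> 0"
    and deriv1: "\<And>z. (l has_real_derivative l' z) (at z)"
    and cont1: "continuous_on UNIV l'"
    and pos: "\<And>z. z \<ge> - l 0 / 2 \<Longrightarrow> l' z > 0"
    and d_def: "d = Sup {ereal z | z. l' z = 0}"
    and d_lt: "d < ereal (- l 0 / 2)"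
    and deriv2: "\<And>z. d < ereal z \<Longrightarrow> (l' has_real_derivative l'' z) (at z)"
    and cont2: "continuous_on {z. d < ereal z} l''"
    and pos2: "\<And>z. d < ereal z \<Longrightarrow> l'' z > 0"
    and inv_cvx: "convex_on {z. d < ereal z} (\<lambda>z. 1 / l' z)"
  shows "\<forall>\<theta>\<in>{0..1}. \<forall>a b. - l 0 / 2 \<le> a \<and> a \<le> b \<longrightarrow> psi l \<theta> a \<le> psi l \<theta> b"
proof -
  have tang: "l y - l x \<ge> l' x * (y - x)" for x y
    using convex_on_imp_above_tangent[OF cvx, of x y "l' x"] deriv1[of x] by simp
  have lmono: "l' x \<le> l' y" if "x \<le> y" for x y
  proof (cases "x = y")
    case False
    hence xy: "x < y" using that by simp
    have "l' x * (y - x) \<le> l' y * (y - x)" using tang[of x y] tang[of y x] by (simp add: algebra_simps)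
    thus ?thesis using xy by simp
  qed simp
  have lnn: "l' x \<ge> 0" for x
  proof -
    have "l (x - 1) \<le> l x" using mono by (simp add: monoD)
    thus ?thesis using tang[of x "x - 1"] by simp
  qed
  have gt_d: "d < ereal x" if px: "l' x > 0" for x
  proof -
    have "isCont l' x" using cont1 by (simp add: continuous_on_eq_continuous_at)
    hence "(l' \<longlongrightarrow> l' x) (at x)" by (simp add: isCont_def)
    hence "eventually (\<lambda>y. l' y > 0) (at x)" using px by (rule order_tendstoD(1))
    then obtain e where e: "e > 0" "\<And>y. y \<noteq> x \<Longrightarrow> dist y x < e \<Longrightarrow> l' y > 0"
      unfolding eventually_at by blast
    have "y \<le> x - e/2" if "l' y = 0" for y
    proof (rule ccontr)
      assume "\<not> y \<le> x - e/2"
      show False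
      proof (cases "y < x")
        case True
        hence "dist y x < e" using \<open>\<not> y \<le> x - e/2\<close> e(1) by (simp add: dist_real_def)
        thus False using e(2)[of y] True that by simp
      next
        case False
        thus False using lmono[of x y] px that by simp
      qed
    qed
    hence "d \<le> ereal (x - e/2)" unfolding d_def by (auto intro!: Sup_least)
    also have "\<dots> < ereal x" using e(1) by simp
    finally show ?thesis .
  qed
  show ?thesis
  proof (intro ballI allI impI)
    fix \<theta> x y :: real
    assume th: "\<theta> \<in> {0..1}" and xy: "- l 0 / 2 \<le> x \<and> x \<le> y"
    define a where "a = (1 + \<theta>) / 2"
    define b where "b = (1 - \<theta>) / 2"
    have a0: "a \<ge> 0" and b0: "b \<ge> 0" and ab: "a + b = 1"
      using th by (auto simp: a_def b_def field_simps)
    define f where "f s z = a * l (s - z) + b * l (s + z)" for s z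
    define g where "g s = (INF z. f s z)" for s
    have psi_eq: "psi l \<theta> s = l s - g s" for s
      unfolding psi_def g_def f_def a_def b_def by simp
    have bdd: "bdd_below (range (f s))" for s
      unfolding f_def using a0 b0 nonneg
      by (intro bdd_belowI[of _ 0]) (auto intro!: add_nonneg_nonneg mult_nonneg_nonneg)
    have gle: "g s \<le> f s z" for s z
      unfolding g_def by (rule cINF_lower[OF bdd]) simp
    have step: "g (s + \<delta>) \<le> g s + \<delta> * l' (s + 2*\<delta>)" if dl: "\<delta> \<ge> 0" for s \<delta>
    proof -
      have "g (s + \<delta>) - \<delta> * l' (s + 2*\<delta>) \<le> g s"
        unfolding g_def[of s]
      proof (rule cINF_greatest)
        fix z
        define u where "u = s - z"
        define v where "v = s + z"
        define U where "U = u + 2*\<delta>"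
        define V where "V = v + 2*\<delta>"
        have mid: "(1 - 1/2) *\<^sub>R U + (1/2) *\<^sub>R V = s + 2*\<delta>"
          by (simp add: U_def V_def u_def v_def field_simps)
        have c1: "g (s + \<delta>) \<le> a * l U + b * l v"
          using gle[of "s + \<delta>" "z - \<delta>"] by (simp add: f_def U_def V_def u_def v_def algebra_simps)
        have c2: "g (s + \<delta>) \<le> a * l u + b * l V"
          using gle[of "s + \<delta>" "z + \<delta>"] by (simp add: f_def U_def V_def u_def v_def algebra_simps)
        have tU: "l U - l u \<le> l' U * (2*\<delta>)" using tang[of U u] by (simp add: U_def)
        have tV: "l V - l v \<le> l' V * (2*\<delta>)" using tang[of V v] by (simp add: V_def)
        have key: "2*a*l' U \<le> l' (s + 2*\<delta>) \<or> 2*b*l' V \<le> l' (s + 2*\<delta>)"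
        proof (cases "l' U = 0 \<or> l' V = 0")
          case True
          thus ?thesis using lnn[of "s + 2*\<delta>"] by auto
        next
          case False
          hence pU: "l' U > 0" and pV: "l' V > 0" using lnn[of U] lnn[of V] by auto
          have "(\<lambda>z. 1 / l' z) ((1 - 1/2) *\<^sub>R U + (1/2) *\<^sub>R V) \<le> (1 - 1/2) * (1 / l' U) + (1/2) * (1 / l' V)"
            by (rule convex_onD[OF inv_cvx]) (use gt_d[OF pU] gt_d[OF pV] in auto)
          hence i: "1 / l' (s + 2*\<delta>) \<le> (1 / l' U + 1 / l' V) / 2" unfolding mid by simp
          have pC: "l' (s + 2*\<delta>) > 0"
          proof (cases "U \<le> V")
            case True
            hence "U \<le> s + 2*\<delta>" by (simp add: U_def V_def u_def v_def)
            thus ?thesis using lmono pU by (meson less_le_trans)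
          next
            case False
            hence "V \<le> s + 2*\<delta>" by (simp add: U_def V_def u_def v_def)
            thus ?thesis using lmono pV by (meson less_le_trans)
          qed
          show ?thesis by (rule hm_aux[OF pU pV pC a0 b0 ab i])
        qed
        thus "g (s + \<delta>) - \<delta> * l' (s + 2*\<delta>) \<le> f s z"
        proof
          assume k: "2*a*l' U \<le> l' (s + 2*\<delta>)"
          have "a * (l U - l u) \<le> a * (l' U * (2*\<delta>))" using tU a0 by (rule mult_left_mono)
          also have "\<dots> = (2*a*l' U) * \<delta>" by simp
          also have "\<dots> \<le> l' (s + 2*\<delta>) * \<delta>" using k dl by (rule mult_right_mono)
          finally show ?thesis using c1 unfolding f_def u_def[symmetric] v_def[symmetric]
            by (simp add: algebra_simps)
        next
          assume k: "2*b*l' V \<le> l' (s + 2*\<delta>)"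
          have "b * (l V - l v) \<le> b * (l' V * (2*\<delta>))" using tV b0 by (rule mult_left_mono)
          also have "\<dots> = (2*b*l' V) * \<delta>" by simp
          also have "\<dots> \<le> l' (s + 2*\<delta>) * \<delta>" using k dl by (rule mult_right_mono)
          finally show ?thesis using c2 unfolding f_def u_def[symmetric] v_def[symmetric]
            by (simp add: algebra_simps)
        qed
      qed simp
      thus ?thesis by simp
    qed
    define p where "p s = psi l \<theta> s" for s
    have pstep: "p (s + \<delta>) - p s \<ge> \<delta> * l' s - \<delta> * l' (s + 2*\<delta>)" if "\<delta> \<ge> 0" for s \<delta>
    proof -
      have "l (s + \<delta>) - l s \<ge> l' s * \<delta>" using tang[of s "s + \<delta>"] by simp
      thus ?thesis using step[OF that, of s] unfolding p_def psi_eq by (simp add: algebra_simps)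
    qed
    define K where "K = 2 * (y - x) * l' (2*y - x)"
    have K0: "K \<ge> 0" using xy lnn unfolding K_def by simp
    have bound: "p y - p x \<ge> - K / real n" if n1: "n \<ge> 1" for n :: nat
    proof -
      define \<delta> where "\<delta> = (y - x) / real n"
      define t where "t k = x + real k * \<delta>" for k :: nat
      have d0: "\<delta> \<ge> 0" using xy n1 by (simp add: \<delta>_def)
      have ind: "p (t k) - p x \<ge> - \<delta> * (l' (t k) + l' (t (Suc k)))" for k
      proof (induction k)
        case 0
        show ?case using lnn d0 by (simp add: t_def)
      next
        case (Suc k)
        have "p (t (Suc k)) - p (t k) \<ge> \<delta> * l' (t k) - \<delta> * l' (t (Suc (Suc k)))"
          using pstep[OF d0, of "t k"] by (simp add: t_def algebra_simps)
        thus ?case using Suc.IH by (simp add: algebra_simps)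
      qed
      have tn: "t n = y" using n1 by (simp add: t_def \<delta>_def)
      have dle: "\<delta> \<le> y - x"
      proof -
        have "(y - x) / real n \<le> (y - x) / 1"
          using xy n1 by (intro divide_left_mono) auto
        thus ?thesis by (simp add: \<delta>_def)
      qed
      have tsn: "t (Suc n) = y + \<delta>" using tn by (simp add: t_def algebra_simps)
      have l1: "l' y \<le> l' (2*y - x)" using xy by (intro lmono) simp
      have l2: "l' (y + \<delta>) \<le> l' (2*y - x)" using dle by (intro lmono) simp
      have "\<delta> * (l' y + l' (y + \<delta>)) \<le> \<delta> * (2 * l' (2*y - x))"
        using l1 l2 d0 by (intro mult_left_mono) auto
      also have "\<dots> = K / real n" by (simp add: K_def \<delta>_def)
      finally have "\<delta> * (l' y + l' (y + \<delta>)) \<le> K / real n" .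
      thus "p y - p x \<ge> - K / real n" using ind[of n] tn tsn by simp
    qed
    have "p y - p x \<ge> 0"
    proof (rule ccontr)
      assume c: "\<not> p y - p x \<ge> 0"
      obtain n :: nat where n: "K / (p x - p y) < real n" using reals_Archimedean2 by blast
      have pos: "p x - p y > 0" using c by simp
      have "real n > 0" using n K0 pos by (smt (verit) divide_nonneg_pos)
      hence n1: "n \<ge> 1" by simp
      have "K < real n * (p x - p y)" using n pos by (simp add: divide_less_eq mult.commute)
      hence "K / real n < p x - p y" using \<open>real n > 0\<close> by (simp add: divide_less_eq mult.commute)
      thus False using bound[OF n1] by simp
    qed
    thus "psi l \<theta> x \<le> psi l \<theta> y" by (simp add: p_def)
  qed
qed

end
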